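(* Let $r\ge 2$, $d\ge 1$. Let $\Delta\subset\mathbb{R}^d$ be a regular simplex with vertices $v_1,\ldots,v_{d+1}$ and centre $c$, and let $B$ be the closed Euclidean unit ball centred at the origin. Then for all sufficiently small $\varepsilon>0$ the following holds. For each $h\in[d+1]$ let $U_h\subset v_h+\varepsilon B$ be a set of $r-1$ points, and let $A=\{c\}\cup\bigcup_{h=1}^{d+1}U_h$ (so $|A|=(r-1)(d+1)+1$), where the points are chosen so that the coordinates of the points of $A$ are algebraically independent. Then there is no proper partition $\{A_1,\ldots,A_r\}$ of $A$ for which the solution $(z,\alpha)$ of \[ z=\sum_{x\in A_j}\alpha(x)\,x \quad\text{and}\quad 1=\sum_{x\in A_j}\alpha(x)\qquad\text{for all } j\in[r] \] satisfies $\alpha(c)<0$ and $\alpha(x)>0$ for all $x\in A\setminus\{c\}$.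
   Context: A partition $\{A_1,\ldots,A_r\}$ of $A$ into $r$ parts is called proper if $1\le |A_j|\le d+1$ for every $j$. Note that here $M=\{c\}$ does not satisfy $\operatorname{conv}M\cap\operatorname{conv}(A\setminus M)=\emptyset$. *)

theory Defs
  imports "HOL-Analysis.Analysis"
begin

text \<open>A polynomial is
  given by a finite set S of exponent vectors (supported on I) and rational coefficients q.\<close>
definition alg_indep_rat :: "'i set \<Rightarrow> ('i \<Rightarrow> real) \<Rightarrow> bool" where
  "alg_indep_rat I x \<longleftrightarrow>
     (\<forall>S q. finite S \<longrightarrow> (\<forall>m\<in>S. \<forall>i. i \<notin> I \<longrightarrow> m i = 0) \<longrightarrow>
        (\<Sum>m\<in>S. of_rat (q m) * (\<Prod>i\<in>I. x i ^ m i)) = 0 \<longrightarrow> (\<forall>m\<in>S. q m = 0))"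

definition regular_simplex :: "(nat \<Rightarrow> real^'n) \<Rightarrow> bool" where
  "regular_simplex v \<longleftrightarrow>
     (\<exists>s>0. \<forall>i\<in>{1..CARD('n)+1}. \<forall>j\<in>{1..CARD('n)+1}. i \<noteq> j \<longrightarrow> dist (v i) (v j) = s)"

definition simplex_centre :: "(nat \<Rightarrow> real^'n) \<Rightarrow> real^'n" where
  "simplex_centre v = (1 / real (CARD('n) + 1)) *\<^sub>R (\<Sum>h\<in>{1..CARD('n)+1}. v h)"

definition proper_partition :: "nat \<Rightarrow> (real^'n) set \<Rightarrow> (nat \<Rightarrow> (real^'n) set) \<Rightarrow> bool" where
  "proper_partition r A P \<longleftrightarrow>
     (\<Union>j\<in>{1..r}. P j) = A \<and>
     (\<forall>j\<in>{1..r}. \<forall>k\<in>{1..r}. j \<noteq> k \<longrightarrow> P j \<inter> P k = {}) \<and>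
     (\<forall>j\<in>{1..r}. finite (P j) \<and> 1 \<le> card (P j) \<and> card (P j) \<le> CARD('n) + 1)"

end

theory Submission
  imports Defs
begin

lemma centre_sum:
  fixes v :: "nat \<Rightarrow> real^'n"
  shows "(\<Sum>k\<in>{1..CARD('n)+1}. (v k - simplex_centre v)) = 0"
proof -
  have "(\<Sum>k\<in>{1..CARD('n)+1}. (v k - simplex_centre v)) = (\<Sum>k\<in>{1..CARD('n)+1}. v k) - real (CARD('n)+1) *\<^sub>R simplex_centre v"
    by (simp only: sum_subtractf sum_constant_scaleR card_atLeastAtMost) simp
  also have "real (CARD('n)+1) *\<^sub>R simplex_centre v = (\<Sum>k\<in>{1..CARD('n)+1}. v k)"
    unfolding simplex_centre_def by (simp del: of_nat_Suc)
  finally show ?thesis by simp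
qed

lemma simplex_inner:
  fixes v :: "nat \<Rightarrow> real^'n"
  assumes "regular_simplex v"
  shows "\<exists>\<mu>>0. \<forall>i\<in>{1..CARD('n)+1}. \<forall>k\<in>{1..CARD('n)+1}. i \<noteq> k \<longrightarrow> (v i - simplex_centre v) \<bullet> (v k - simplex_centre v) = -\<mu>"
proof -
  obtain s where s: "s > 0" "\<forall>i\<in>{1..CARD('n)+1}. \<forall>j\<in>{1..CARD('n)+1}. i \<noteq> j \<longrightarrow> dist (v i) (v j) = s"
    using assms unfolding regular_simplex_def by blast
  define I where "I = {1..CARD('n)+1}"
  define a where "a i = v i - simplex_centre v" for i
  define S where "S = (\<Sum>i\<in>I. a i \<bullet> a i)"
  define d where "d = real CARD('n)"
  have finI: "finite I" and cardI: "card I = CARD('n)+1" by (auto simp: I_def)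
  have sa: "(\<Sum>i\<in>I. a i) = 0" using centre_sum[of v] by (simp add: a_def I_def)
  have L2: "a k \<bullet> a k + (\<Sum>i\<in>I-{k}. a i \<bullet> a k) = 0" if "k \<in> I" for k
  proof -
    have "(\<Sum>i\<in>I. a i \<bullet> a k) = 0" using sa by (simp add: inner_sum_left[symmetric])
    thus ?thesis using sum.remove[OF finI that, of "\<lambda>i. a i \<bullet> a k"] by simp
  qed
  have L3: "a i \<bullet> a i + a k \<bullet> a k - 2 * (a i \<bullet> a k) = s^2" if "i \<in> I" "k \<in> I" "i \<noteq> k" for i k
  proof -
    have "dist (v i) (v k) = s" using s(2) that by (auto simp: I_def)
    hence "norm (a i - a k) = s" by (simp add: a_def dist_norm)
    hence "(a i - a k) \<bullet> (a i - a k) = s^2" by (metis power2_norm_eq_inner)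
    thus ?thesis by (simp add: inner_diff_left inner_diff_right inner_commute)
  qed
  have L4: "S + (d+1) * (a k \<bullet> a k) = d * s^2" if "k \<in> I" for k
  proof -
    have "(\<Sum>i\<in>I-{k}. a i \<bullet> a i + a k \<bullet> a k - 2 * (a i \<bullet> a k)) = (\<Sum>i\<in>I-{k}. s^2)"
      using L3 that by (intro sum.cong) auto
    also have "... = d * s^2" using cardI that finI by (simp add: d_def)
    finally have e: "(\<Sum>i\<in>I-{k}. a i \<bullet> a i + a k \<bullet> a k - 2 * (a i \<bullet> a k)) = d * s^2" .
    have "(\<Sum>i\<in>I-{k}. a i \<bullet> a i + a k \<bullet> a k - 2 * (a i \<bullet> a k)) = (\<Sum>i\<in>I-{k}. a i \<bullet> a i) + d * (a k \<bullet> a k) - 2 * (\<Sum>i\<in>I-{k}. a i \<bullet> a k)"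
      using cardI that finI by (simp add: sum.distrib sum_subtractf sum_distrib_left d_def)
    moreover have "S = a k \<bullet> a k + (\<Sum>i\<in>I-{k}. a i \<bullet> a i)"
      unfolding S_def using sum.remove[OF finI that] by simp
    ultimately show ?thesis using e L2[OF that] by (simp add: algebra_simps)
  qed
  define R2 where "R2 = (d * s^2 - S) / (d+1)"
  have dpos: "d \<ge> 0" by (simp add: d_def)
  have R2: "a k \<bullet> a k = R2" if "k \<in> I" for k
    using L4[OF that] dpos unfolding R2_def by (simp add: field_simps)
  have "S = (d+1) * R2" unfolding S_def using R2 cardI by (simp add: d_def)
  moreover have "(d+1) * R2 = d * s^2 - S" unfolding R2_def using dpos by simp
  ultimately have R2v: "2*((d+1) * R2) = d * s^2" by linarith
  show ?thesis
  proof (intro exI[of _ "s^2 / (2*(d+1))"] conjI ballI impI)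
    show "s^2 / (2*(d+1)) > 0" using s dpos by simp
    fix i k assume ik: "i \<in> {1..CARD('n)+1}" "k \<in> {1..CARD('n)+1}" "i \<noteq> k"
    hence "a i \<bullet> a k = (R2 + R2 - s^2)/2" using L3[of i k] R2 by (simp add: I_def)
    also have "... = (2 * ((d + 1) * R2) - (d + 1) * s ^ 2) / (2 * (d + 1))" using dpos by (simp add: field_simps)
    also have "... = (d * s ^ 2 - (d + 1) * s ^ 2) / (2 * (d + 1))" unfolding R2v ..
    also have "... = - (s^2 / (2*(d+1)))" using dpos by (simp add: field_simps)
    finally show "(v i - simplex_centre v) \<bullet> (v k - simplex_centre v) = - (s^2 / (2*(d+1)))"
      by (simp add: a_def)
  qed
qed

theorem mainTheorem7:
  fixes r :: nat and v :: "nat \<Rightarrow> real^'n"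
  assumes "r \<ge> 2" and "regular_simplex v"
  shows "\<exists>\<epsilon>0>0. \<forall>\<epsilon>. 0 < \<epsilon> \<and> \<epsilon> < \<epsilon>0 \<longrightarrow>
    (\<forall>U :: nat \<Rightarrow> (real^'n) set. \<forall>A.
       (\<forall>h\<in>{1..CARD('n)+1}. finite (U h) \<and> card (U h) = r - 1 \<and> U h \<subseteq> cball (v h) \<epsilon>) \<longrightarrow>
       A = insert (simplex_centre v) (\<Union>h\<in>{1..CARD('n)+1}. U h) \<longrightarrow>
       alg_indep_rat (A \<times> UNIV) (\<lambda>(x, i). x $ i) \<longrightarrow>
       \<not> (\<exists>P z \<alpha>. proper_partition r A P \<and>
             (\<forall>j\<in>{1..r}. z = (\<Sum>x\<in>P j. \<alpha> x *\<^sub>R x) \<and> (\<Sum>x\<in>P j. \<alpha> x) = 1) \<and>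
             \<alpha> (simplex_centre v) < 0 \<and>
             (\<forall>x\<in>A - {simplex_centre v}. \<alpha> x > 0)))"
proof -
  obtain \<mu> where mu: "\<mu> > 0" and muI: "\<And>i k. i\<in>{1..CARD('n)+1} \<Longrightarrow> k\<in>{1..CARD('n)+1} \<Longrightarrow> i \<noteq> k \<Longrightarrow>
      (v i - simplex_centre v) \<bullet> (v k - simplex_centre v) = -\<mu>"
    using simplex_inner[OF assms(2)] by blast
  define c where "c = simplex_centre v"
  define I where "I = {1..CARD('n)+1}"
  define a where "a i = v i - c" for i
  define Rs where "Rs = (\<Sum>k\<in>I. norm (a k))"
  have finI: "finite I" and neI: "I \<noteq> {}" by (auto simp: I_def)
  have Rs0: "Rs \<ge> 0" unfolding Rs_def by (simp add: sum_nonneg)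
  have normle: "norm (a k) \<le> Rs" if "k \<in> I" for k
    unfolding Rs_def using member_le_sum[OF that _ finI, of "\<lambda>k. norm (a k)"] by simp
  have sa: "(\<Sum>i\<in>I. a i) = 0" using centre_sum[of v] by (simp add: a_def I_def c_def)
  show ?thesis
  proof (intro exI[of _ "\<mu> / (Rs + 1)"] conjI allI impI notI)
    show "\<mu> / (Rs + 1) > 0" using mu Rs0 by simp
    fix \<epsilon> :: real and U :: "nat \<Rightarrow> (real^'n) set" and A
    assume eps: "0 < \<epsilon> \<and> \<epsilon> < \<mu> / (Rs + 1)"
      and hU: "\<forall>h\<in>{1..CARD('n)+1}. finite (U h) \<and> card (U h) = r - 1 \<and> U h \<subseteq> cball (v h) \<epsilon>"
      and hA: "A = insert (simplex_centre v) (\<Union>h\<in>{1..CARD('n)+1}. U h)"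
      and "alg_indep_rat (A \<times> UNIV) (\<lambda>(x, i). x $ i)"
      and ex: "\<exists>P z \<alpha>. proper_partition r A P \<and>
             (\<forall>j\<in>{1..r}. z = (\<Sum>x\<in>P j. \<alpha> x *\<^sub>R x) \<and> (\<Sum>x\<in>P j. \<alpha> x) = 1) \<and>
             \<alpha> (simplex_centre v) < 0 \<and>
             (\<forall>x\<in>A - {simplex_centre v}. \<alpha> x > 0)"
    then obtain P z \<alpha> where pp: "proper_partition r A P"
      and zj: "\<And>j. j\<in>{1..r} \<Longrightarrow> z = (\<Sum>x\<in>P j. \<alpha> x *\<^sub>R x) \<and> (\<Sum>x\<in>P j. \<alpha> x) = 1"
      and ac: "\<alpha> c < 0" and apos: "\<And>x. x\<in>A - {c} \<Longrightarrow> \<alpha> x > 0"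
      unfolding c_def by blast
    have Pun: "(\<Union>j\<in>{1..r}. P j) = A"
      using pp unfolding proper_partition_def by blast
    have Pdis: "\<And>j k. j\<in>{1..r} \<Longrightarrow> k\<in>{1..r} \<Longrightarrow> j \<noteq> k \<Longrightarrow> P j \<inter> P k = {}"
      using pp unfolding proper_partition_def by simp
    have "(\<Sum>k\<in>I. a k \<bullet> (z - c)) = 0" using sa by (simp add: inner_sum_left[symmetric])
    have "\<exists>k\<in>I. a k \<bullet> (z - c) \<ge> 0"
    proof (rule ccontr)
      assume "\<not> ?thesis"
      hence "(\<Sum>k\<in>I. a k \<bullet> (z - c)) < (\<Sum>k\<in>I. (0::real))"
        using finI neI by (intro sum_strict_mono) auto
      with \<open>(\<Sum>k\<in>I. a k \<bullet> (z - c)) = 0\<close> show False by simp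
    qed
    then obtain k where kI: "k \<in> I" and fk: "a k \<bullet> (z - c) \<ge> 0" by blast
    define T where "T = -\<mu> + Rs * \<epsilon>"
    have "(Rs + 1) * \<epsilon> < \<mu>" using eps Rs0 by (simp add: field_simps)
    hence Tneg: "T < 0" unfolding T_def using eps by (simp add: algebra_simps)
    have hit: "P j \<inter> U k \<noteq> {}" if jr: "j \<in> {1..r}" for j
    proof
      assume empty: "P j \<inter> U k = {}"
      have z: "z = (\<Sum>x\<in>P j. \<alpha> x *\<^sub>R x)" and s1: "(\<Sum>x\<in>P j. \<alpha> x) = 1" using zj[OF jr] by auto
      have "z - c = (\<Sum>x\<in>P j. \<alpha> x *\<^sub>R x) - (\<Sum>x\<in>P j. \<alpha> x) *\<^sub>R c" using z s1 by simp
      also have "... = (\<Sum>x\<in>P j. \<alpha> x *\<^sub>R (x - c))"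
        by (simp add: scaleR_sum_left sum_subtractf scaleR_diff_right)
      finally have "a k \<bullet> (z - c) = (\<Sum>x\<in>P j. \<alpha> x * (a k \<bullet> (x - c)))"
        by (simp add: inner_sum_right)
      also have "... \<le> (\<Sum>x\<in>P j. \<alpha> x * T)"
      proof (rule sum_mono)
        fix x assume xP: "x \<in> P j"
        show "\<alpha> x * (a k \<bullet> (x - c)) \<le> \<alpha> x * T"
        proof (cases "x = c")
          case True
          then show ?thesis using ac Tneg by (simp add: mult_neg_neg less_imp_le)
        next
          case False
          have xA: "x \<in> A" using xP jr Pun by blast
          hence ax: "\<alpha> x > 0" using False apos by blast
          obtain h where hI: "h \<in> I" and xU: "x \<in> U h" using xA False hA unfolding c_def I_def by auto
          have hk: "h \<noteq> k" using xU xP empty by blast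
          have "x \<in> cball (v h) \<epsilon>" using hU hI xU unfolding I_def by blast
          hence dx: "norm (x - v h) \<le> \<epsilon>" by (simp add: dist_norm norm_minus_commute)
          have "a k \<bullet> (x - c) = a k \<bullet> (v h - c) + a k \<bullet> (x - v h)" by (simp add: inner_diff_right)
          also have "a k \<bullet> (v h - c) = -\<mu>" using muI[of k h] kI hI hk unfolding a_def c_def I_def by auto
          also have "a k \<bullet> (x - v h) \<le> norm (a k) * norm (x - v h)" by (rule norm_cauchy_schwarz)
          also have "... \<le> Rs * \<epsilon>" using normle[OF kI] dx Rs0 by (intro mult_mono) auto
          finally have "a k \<bullet> (x - c) \<le> T" unfolding T_def by simp
          thus ?thesis using ax by simp
        qed
      qed
      also have "... = T" using s1 by (simp add: sum_distrib_right[symmetric])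
      finally show False using fk Tneg by simp
    qed
    define f where "f j = (SOME x. x \<in> P j \<inter> U k)" for j
    have fP: "f j \<in> P j \<inter> U k" if "j \<in> {1..r}" for j
    proof -
      have "\<exists>x. x \<in> P j \<inter> U k" using hit[OF that] by blast
      thus ?thesis unfolding f_def by (rule someI_ex)
    qed
    have "inj_on f {1..r}"
    proof (rule inj_onI)
      fix i j assume "i \<in> {1..r}" "j \<in> {1..r}" "f i = f j"
      thus "i = j" using fP[of i] fP[of j] Pdis[of i j] by auto
    qed
    moreover have "f ` {1..r} \<subseteq> U k" using fP by blast
    moreover have "finite (U k)" "card (U k) = r - 1" using hU kI unfolding I_def by auto
    ultimately have "card {1..r} \<le> r - 1" by (metis card_inj_on_le)
    thus False using assms(1) by simp
  qed
qed

end
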